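(* Let $S_1$ and $S_2$ be two disjoint sets of cells of an $n\times n$ array, each forming a Hamilton cycle. Then for any positive integers $t$ and $s$ with $s>t+2n$, the cells of $S_1\cup S_2$ can be filled with nonzero integers so that the resulting (partial) array is shiftable, has support $\{s+i,\ t+i\mid 1\le i\le 2n\}$ (each of these $4n$ absolute values occurring exactly once), and the four entries in each row and in each column sum to $0$.
   Context: Cells of an $n\times n$ array are identified with edges of $K_{n,n}$ (cell $(i,j)$ ↔ edge $\{a_i,b_j\}$); a set of cells forms a Hamilton cycle if the corresponding edge set is a single cycle of length $2n$. The support of an array is the set of absolute values of its entries. An array is shiftable if each row and each column contains the same number of positive and negative entries. *)

theory Defs
  imports Main
begin

text \<open>Cell (i,j) of an n x n array (i,j < n) corresponds to the edge {a_i, b_j} of K_{n,n}.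
  Vertices of K_{n,n}: Inl i = a_i (row i), Inr j = b_j (column j).\<close>

definition cell_edge :: "nat + nat \<Rightarrow> nat + nat \<Rightarrow> nat \<times> nat \<Rightarrow> bool" where
  "cell_edge u v c \<longleftrightarrow> (u = Inl (fst c) \<and> v = Inr (snd c)) \<or> (u = Inr (snd c) \<and> v = Inl (fst c))"

definition hamilton_cycle :: "nat \<Rightarrow> (nat \<times> nat) set \<Rightarrow> bool" where
  "hamilton_cycle n S \<longleftrightarrow>
    (\<exists>vs. distinct vs \<and> set vs = Inl ` {..<n} \<union> Inr ` {..<n} \<and> length vs \<ge> 3 \<and>
      (\<forall>k < length vs. \<exists>c. cell_edge (vs ! k) (vs ! ((k + 1) mod length vs)) c) \<and>
      S = {c. \<exists>k < length vs. cell_edge (vs ! k) (vs ! ((k + 1) mod length vs)) c})"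

text \<open>Shiftable: each row and column has as many positive as negative entries
  (empty cells are represented by 0).\<close>

definition shiftable :: "nat \<Rightarrow> (nat \<Rightarrow> nat \<Rightarrow> int) \<Rightarrow> bool" where
  "shiftable n A \<longleftrightarrow>
    (\<forall>i<n. card {j. j < n \<and> A i j > 0} = card {j. j < n \<and> A i j < 0}) \<and>
    (\<forall>j<n. card {i. i < n \<and> A i j > 0} = card {i. i < n \<and> A i j < 0})"

end

theory Submission
  imports Defs
begin

lemma cell_edge_Inl: "cell_edge (Inl i) v c \<longleftrightarrow> fst c = i \<and> v = Inr (snd c)"
  unfolding cell_edge_def by auto
lemma cell_edge_Inr: "cell_edge (Inr j) v c \<longleftrightarrow> snd c = j \<and> v = Inl (fst c)"
  unfolding cell_edge_def by auto

definition prv :: "nat \<Rightarrow> nat \<Rightarrow> nat" where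
  "prv L p = (if p = 0 then L - 1 else p - 1)"

definition cellof :: "(nat + nat) list \<Rightarrow> nat \<Rightarrow> nat \<times> nat" where
  "cellof vs k = (case vs ! k of Inl i \<Rightarrow> (i, projr (vs ! ((k+1) mod length vs)))
                   | Inr j \<Rightarrow> (projl (vs ! ((k+1) mod length vs)), j))"

definition inc :: "nat + nat \<Rightarrow> nat \<times> nat \<Rightarrow> bool" where
  "inc u c \<longleftrightarrow> u = Inl (fst c) \<or> u = Inr (snd c)"

lemma cell_edge_two: "cell_edge u v c \<Longrightarrow> cell_edge u' v' c \<Longrightarrow> (u = u' \<and> v = v') \<or> (u = v' \<and> v = u')"
  unfolding cell_edge_def by auto

locale hc =
  fixes n :: nat and vs :: "(nat + nat) list"
  assumes dist: "distinct vs" and setv: "set vs = Inl ` {..<n} \<union> Inr ` {..<n}"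
    and len3: "length vs \<ge> 3"
    and adj: "\<forall>k<length vs. \<exists>c. cell_edge (vs!k) (vs!((k+1) mod length vs)) c"
    and v0: "vs ! 0 = Inl 0"
begin

abbreviation "L \<equiv> length vs"

lemma Lpos0[simp]: "0 < L" using len3 by linarith
lemma vsne[simp]: "vs \<noteq> []" using Lpos0 by auto

lemma lenv: "L = 2 * n"
proof -
  have "card (Inl ` {..<n} \<union> Inr ` {..<n} :: (nat+nat) set) = n + n"
    by (subst card_Un_disjoint) (auto simp: card_image)
  with distinct_card[OF dist] setv show ?thesis by simp
qed

lemma n2: "n \<ge> 2" using lenv len3 by simp

lemma parity: "k < L \<Longrightarrow> isl (vs ! k) \<longleftrightarrow> even k"
proof (induction k)
  case 0 then show ?case using v0 by simp
next
  case (Suc k)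
  then have "k < L" by simp
  with adj obtain c where "cell_edge (vs!k) (vs!((k+1) mod L)) c" by blast
  moreover have "(k+1) mod L = Suc k" using Suc.prems by simp
  ultimately have "isl (vs!(Suc k)) \<longleftrightarrow> \<not> isl (vs!k)" unfolding cell_edge_def by auto
  with Suc show ?case by simp
qed

lemma edge_iff: "k < L \<Longrightarrow> cell_edge (vs!k) (vs!((k+1) mod L)) c \<longleftrightarrow> c = cellof vs k"
proof -
  assume k: "k < L"
  with adj obtain c0 where c0: "cell_edge (vs!k) (vs!((k+1) mod L)) c0" by blast
  show ?thesis
  proof (cases "vs!k")
    case (Inl i)
    then show ?thesis using c0 by (auto simp: cellof_def cell_edge_Inl prod_eq_iff)
  next
    case (Inr j)
    then show ?thesis using c0 by (auto simp: cellof_def cell_edge_Inr prod_eq_iff)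
  qed
qed

lemma S_eq: "{c. \<exists>k<L. cell_edge (vs!k) (vs!((k+1) mod L)) c} = cellof vs ` {..<L}"
  using edge_iff by auto

lemma mem_v: "k < L \<Longrightarrow> vs ! k \<in> Inl ` {..<n} \<union> Inr ` {..<n}"
  using setv nth_mem by blast

lemma cell_range: "k < L \<Longrightarrow> fst (cellof vs k) < n \<and> snd (cellof vs k) < n"
proof -
  assume k: "k < L"
  have k1: "(k+1) mod L < L" using k by simp
  have e: "cell_edge (vs!k) (vs!((k+1) mod L)) (cellof vs k)" using edge_iff[OF k] by simp
  show ?thesis
  proof (cases "vs!k")
    case (Inl i)
    then show ?thesis using e mem_v[OF k] mem_v[OF k1] by (auto simp: cell_edge_Inl)
  next
    case (Inr j)
    then show ?thesis using e mem_v[OF k] mem_v[OF k1] by (auto simp: cell_edge_Inr)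
  qed
qed

lemma inc_iff: "k < L \<Longrightarrow> inc u (cellof vs k) \<longleftrightarrow> vs!k = u \<or> vs!((k+1) mod L) = u"
proof -
  assume k: "k < L"
  have e: "cell_edge (vs!k) (vs!((k+1) mod L)) (cellof vs k)" using edge_iff[OF k] by simp
  show ?thesis
  proof (cases "vs!k")
    case (Inl i)
    then show ?thesis using e by (cases u) (auto simp: cell_edge_Inl inc_def)
  next
    case (Inr j)
    then show ?thesis using e by (cases u) (auto simp: cell_edge_Inr inc_def)
  qed
qed

lemma mod_suc: "k < L \<Longrightarrow> (k+1) mod L = (if k + 1 < L then k+1 else 0)"
proof (cases "k+1 < L")
  case False
  assume "k < L"
  with False have "k + 1 = L" by simp
  then show ?thesis by simp
qed simp

lemma cyc_arith: "k < L \<Longrightarrow> k' < L \<Longrightarrow> k = (k'+1) mod L \<Longrightarrow> k' = (k+1) mod L \<Longrightarrow> False"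
proof -
  assume a: "k < L" "k' < L" "k = (k'+1) mod L" "k' = (k+1) mod L"
  have 1: "k = (if k' + 1 < L then k'+1 else 0)" using a(3) mod_suc[OF a(2)] by (rule trans)
  have 2: "k' = (if k + 1 < L then k+1 else 0)" using a(4) mod_suc[OF a(1)] by (rule trans)
  have 3: "(k' + 1 < L \<and> k = k'+1) \<or> (\<not> k' + 1 < L \<and> k = 0)" using 1 by (simp only: if_split_asm) blast+
  have 4: "(k + 1 < L \<and> k' = k+1) \<or> (\<not> k + 1 < L \<and> k' = 0)" using 2 by (simp only: if_split_asm) blast+
  show False using 3 4 len3 by presburger
qed

lemma nxt_eq: "k < L \<Longrightarrow> p < L \<Longrightarrow> (k+1) mod L = p \<longleftrightarrow> k = prv L p"
proof -
  assume a: "k < L" "p < L"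
  have 1: "(k+1) mod L = (if k + 1 < L then k+1 else 0)" using mod_suc[OF a(1)] .
  show ?thesis unfolding 1 prv_def using a len3 by (simp split: if_splits) linarith?
qed

lemma inj_cell: "inj_on (cellof vs) {..<L}"
proof (rule inj_onI)
  fix k k' assume k: "k \<in> {..<L}" and k': "k' \<in> {..<L}" and eq: "cellof vs k = cellof vs k'"
  have e: "cell_edge (vs!k) (vs!((k+1) mod L)) (cellof vs k)" using edge_iff k by simp
  have e': "cell_edge (vs!k') (vs!((k'+1) mod L)) (cellof vs k)" using edge_iff k' eq by simp
  have k1: "(k+1) mod L < L" "(k'+1) mod L < L" using k k' by auto
  have "(vs!k = vs!k' \<and> vs!((k+1) mod L) = vs!((k'+1) mod L)) \<or>
        (vs!k = vs!((k'+1) mod L) \<and> vs!((k+1) mod L) = vs!k')"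
    using cell_edge_two[OF e e'] .
  then show "k = k'"
  proof
    assume "vs!k = vs!k' \<and> vs!((k+1) mod L) = vs!((k'+1) mod L)"
    then show "k = k'" using nth_eq_iff_index_eq[OF dist, of k k'] k k' by simp
  next
    assume h: "vs!k = vs!((k'+1) mod L) \<and> vs!((k+1) mod L) = vs!k'"
    have kl: "k < L" "k' < L" using k k' by auto
    have "k = (k'+1) mod L" using h nth_eq_iff_index_eq[OF dist kl(1) k1(2)] by simp
    moreover have "(k+1) mod L = k'" using h nth_eq_iff_index_eq[OF dist k1(1) kl(2)] by simp
    then have "k' = (k+1) mod L" by simp
    ultimately show "k = k'" using cyc_arith k k' by blast
  qed
qed

lemma inc_set: "p < L \<Longrightarrow> {k. k < L \<and> inc (vs!p) (cellof vs k)} = {p, prv L p}"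
proof -
  assume p: "p < L"
  have pp: "prv L p < L" using p len3 by (auto simp: prv_def)
  have "k < L \<Longrightarrow> inc (vs!p) (cellof vs k) \<longleftrightarrow> k = p \<or> k = prv L p" for k
  proof -
    assume k: "k < L"
    have k1: "(k+1) mod L < L" using k by simp
    show ?thesis using inc_iff[OF k] nxt_eq[OF k p] p k k1 dist
      by (auto simp: nth_eq_iff_index_eq)
  qed
  then show ?thesis using p pp by auto
qed

lemma prv_ne: "p < L \<Longrightarrow> prv L p \<noteq> p" using len3 by (auto simp: prv_def)

end


lemma rot_idx: "j < (L::nat) \<Longrightarrow> p < L \<Longrightarrow> ((j + L - p) mod L + p) mod L = j"
proof -
  assume a: "j < L" "p < L"
  have "((j + L - p) mod L + p) mod L = (j + L - p + p) mod L" by (simp add: mod_add_left_eq)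
  also have "j + L - p + p = j + L" using a by simp
  finally show ?thesis using a by simp
qed

lemma ham_rot:
  assumes "hamilton_cycle n S"
  shows "\<exists>vs. hc n vs \<and> S = cellof vs ` {..<length vs}"
proof -
  obtain vs0 where d: "distinct vs0" and st: "set vs0 = Inl ` {..<n} \<union> Inr ` {..<n}"
    and l3: "length vs0 \<ge> 3"
    and ad: "\<forall>k < length vs0. \<exists>c. cell_edge (vs0 ! k) (vs0 ! ((k + 1) mod length vs0)) c"
    and S: "S = {c. \<exists>k < length vs0. cell_edge (vs0 ! k) (vs0 ! ((k + 1) mod length vs0)) c}"
    using assms unfolding hamilton_cycle_def by blast
  define L where "L = length vs0"
  have Lp: "0 < L" using l3 L_def by linarith
  have "n > 0"
  proof (rule ccontr)
    assume "\<not> n > 0"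
    then have "set vs0 = {}" using st by simp
    then show False using l3 by simp
  qed
  then have "Inl 0 \<in> set vs0" using st by auto
  then obtain p where p: "p < L" "vs0 ! p = Inl 0" unfolding L_def by (auto simp: in_set_conv_nth)
  define vs where "vs = rotate p vs0"
  have lv: "length vs = L" unfolding vs_def L_def by simp
  have nthv: "k < L \<Longrightarrow> vs ! k = vs0 ! ((k + p) mod L)" for k
    unfolding vs_def L_def by (simp add: nth_rotate add.commute)
  have modeq: "((k+1) mod L + p) mod L = ((k + p) mod L + 1) mod L" for k
  proof -
    have "((k+1) mod L + p) mod L = (k + 1 + p) mod L" by (rule mod_add_left_eq)
    moreover have "((k+p) mod L + 1) mod L = (k + p + 1) mod L" by (rule mod_add_left_eq)
    moreover have "k + 1 + p = k + p + 1" by simp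
    ultimately show ?thesis by simp
  qed
  have nthv1: "k < L \<Longrightarrow> vs ! ((k+1) mod L) = vs0 ! (((k + p) mod L + 1) mod L)" for k
    using nthv[of "(k+1) mod L"] Lp modeq by simp
  have hcv: "hc n vs"
  proof
    show "distinct vs" unfolding vs_def using d by simp
    show "set vs = Inl ` {..<n} \<union> Inr ` {..<n}" unfolding vs_def using st by simp
    show "length vs \<ge> 3" using lv l3 L_def by simp
    show "vs ! 0 = Inl 0" using nthv[of 0] Lp p by simp
    show "\<forall>k<length vs. \<exists>c. cell_edge (vs!k) (vs!((k+1) mod length vs)) c"
    proof (intro allI impI)
      fix k assume k: "k < length vs"
      have "(k + p) mod L < L" using Lp by simp
      then show "\<exists>c. cell_edge (vs!k) (vs!((k+1) mod length vs)) c"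
        using ad nthv[of k] nthv1[of k] k lv L_def by simp
    qed
  qed
  have "S = {c. \<exists>k<length vs. cell_edge (vs!k) (vs!((k+1) mod length vs)) c}"
  proof (rule set_eqI, rule iffI)
    fix c assume "c \<in> S"
    then obtain j where j: "j < L" "cell_edge (vs0 ! j) (vs0 ! ((j + 1) mod L)) c"
      using S L_def by blast
    define k where "k = (j + L - p) mod L"
    have k: "k < L" using Lp k_def by simp
    have "(k + p) mod L = j" using rot_idx[OF j(1) p(1)] k_def by simp
    then show "c \<in> {c. \<exists>k<length vs. cell_edge (vs!k) (vs!((k+1) mod length vs)) c}"
      using j k nthv[of k] nthv1[of k] lv by auto
  next
    fix c assume "c \<in> {c. \<exists>k<length vs. cell_edge (vs!k) (vs!((k+1) mod length vs)) c}"
    then obtain k where k: "k < L" "cell_edge (vs!k) (vs!((k+1) mod L)) c" using lv by auto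
    have "(k + p) mod L < L" using Lp by simp
    then show "c \<in> S" using k nthv[of k] nthv1[of k] S L_def by auto
  qed
  then show ?thesis using hcv hc.S_eq[OF hcv] by blast
qed


theorem lemma2p3:
  fixes n :: nat and S1 S2 :: "(nat \<times> nat) set" and s t :: int
  assumes "hamilton_cycle n S1" and "hamilton_cycle n S2" and "S1 \<inter> S2 = {}"
    and "t > 0" and "s > t + 2 * int n"
  shows "\<exists>A :: nat \<Rightarrow> nat \<Rightarrow> int.
     (\<forall>i j. (i, j) \<in> S1 \<union> S2 \<longleftrightarrow> A i j \<noteq> 0) \<and>
     shiftable n A \<and>
     bij_betw (\<lambda>(i, j). \<bar>A i j\<bar>) (S1 \<union> S2)
        ({s + k | k. 1 \<le> k \<and> k \<le> 2 * int n} \<union> {t + k | k. 1 \<le> k \<and> k \<le> 2 * int n}) \<and>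
     (\<forall>i<n. (\<Sum>j<n. A i j) = 0) \<and>
     (\<forall>j<n. (\<Sum>i<n. A i j) = 0)"
proof -
  obtain vs where hv: "hc n vs" and S1: "S1 = cellof vs ` {..<length vs}"
    using ham_rot[OF assms(1)] by blast
  obtain ws where hw: "hc n ws" and S2: "S2 = cellof ws ` {..<length ws}"
    using ham_rot[OF assms(2)] by blast
  define m where "m = 2 * n"
  have lv: "length vs = m" and lw: "length ws = m" using hc.lenv[OF hv] hc.lenv[OF hw] m_def by auto
  have n2: "n \<ge> 2" using hc.n2[OF hv] .
  have S1': "S1 = cellof vs ` {..<m}" using S1 lv by simp
  have S2': "S2 = cellof ws ` {..<m}" using S2 lw by simp
  define C where "C k = (if k < m then cellof vs k else cellof ws (k - m))" for k
  define G where "G k = (if k < m then (if even k then s + int k + 1 else - (s + int k + 1))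
      else (if even (k - m) then - (t + int (k - m) + 1) else t + int (k - m) + 1))" for k
  define A where "A i j = (\<Sum>k<2*m. if C k = (i, j) then G k else 0)" for i j
  have injC: "inj_on C {..<2*m}"
  proof (rule inj_onI)
    fix k k' assume k: "k \<in> {..<2*m}" and k': "k' \<in> {..<2*m}" and eq: "C k = C k'"
    show "k = k'"
    proof (cases "k < m"; cases "k' < m")
      assume "k < m" "k' < m"
      then show ?thesis using eq inj_onD[OF hc.inj_cell[OF hv]] lv unfolding C_def by auto
    next
      assume a: "k < m" "\<not> k' < m"
      then have "C k \<in> S1" "C k' \<in> S2" using k' unfolding C_def S1' S2' by auto
      then show ?thesis using eq assms(3) by auto
    next
      assume a: "\<not> k < m" "k' < m"
      then have "C k \<in> S2" "C k' \<in> S1" using k unfolding C_def S1' S2' by auto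
      then show ?thesis using eq assms(3) by auto
    next
      assume a: "\<not> k < m" "\<not> k' < m"
      then have "cellof ws (k - m) = cellof ws (k' - m)" "k - m < length ws" "k' - m < length ws"
        using eq k k' lw unfolding C_def by auto
      then have "k - m = k' - m" using inj_onD[OF hc.inj_cell[OF hw]] by blast
      then show ?thesis using a by simp
    qed
  qed
  have imC: "C ` {..<2*m} = S1 \<union> S2"
  proof (rule set_eqI, rule iffI)
    fix x assume "x \<in> C ` {..<2*m}"
    then obtain k where "k < 2*m" "x = C k" by auto
    then show "x \<in> S1 \<union> S2" unfolding C_def S1' S2' by (cases "k < m") auto
  next
    fix x assume "x \<in> S1 \<union> S2"
    then show "x \<in> C ` {..<2*m}"
    proof
      assume "x \<in> S1"
      then obtain k where "k < m" "x = cellof vs k" using S1' by auto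
      then have "x = C k" "k < 2*m" unfolding C_def by auto
      then show ?thesis by blast
    next
      assume "x \<in> S2"
      then obtain k where "k < m" "x = cellof ws k" using S2' by auto
      then have "x = C (k + m)" "k + m < 2*m" unfolding C_def by auto
      then show ?thesis by blast
    qed
  qed
  have AC: "A (fst (C k)) (snd (C k)) = G k" if k: "k < 2*m" for k
  proof -
    have "A (fst (C k)) (snd (C k)) = (\<Sum>k'<2*m. if k' = k then G k' else 0)"
      unfolding A_def
    proof (rule sum.cong)
      fix k' assume "k' \<in> {..<2*m}"
      then have "C k' = C k \<longleftrightarrow> k' = k" using inj_on_eq_iff[OF injC] k by auto
      then show "(if C k' = (fst (C k), snd (C k)) then G k' else 0) = (if k' = k then G k' else 0)"
        by simp
    qed simp
    also have "\<dots> = G k" using k by simp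
    finally show ?thesis .
  qed
  have A0: "A i j = 0" if "(i, j) \<notin> S1 \<union> S2" for i j
  proof -
    have "C k \<noteq> (i, j)" if "k < 2*m" for k
    proof
      assume "C k = (i, j)"
      then have "(i, j) \<in> C ` {..<2*m}" using that by (metis imageI lessThan_iff)
      then show False using imC \<open>(i, j) \<notin> S1 \<union> S2\<close> by simp
    qed
    then show ?thesis unfolding A_def by simp
  qed
  have Gnz: "G k \<noteq> 0" for k using assms(4,5) unfolding G_def by auto
  have Gpos: "G k > 0 \<longleftrightarrow> (k < m \<and> even k) \<or> (\<not> k < m \<and> odd (k - m))" for k
    using assms(4,5) unfolding G_def by auto
  have Gneg: "G k < 0 \<longleftrightarrow> \<not> ((k < m \<and> even k) \<or> (\<not> k < m \<and> odd (k - m)))" for k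
    using Gpos[of k] Gnz[of k] by (simp only: linorder_neq_iff) (auto simp: not_less)
  have rng: "fst (C k) < n \<and> snd (C k) < n" if "k < 2*m" for k
    using hc.cell_range[OF hv] hc.cell_range[OF hw] lv lw that unfolding C_def
    by (cases "k < m") auto
  have nz: "(i, j) \<in> S1 \<union> S2 \<longleftrightarrow> A i j \<noteq> 0" for i j
  proof
    assume "(i, j) \<in> S1 \<union> S2"
    then obtain k where k: "k < 2*m" "(i, j) = C k" using imC by (metis imageE lessThan_iff)
    then show "A i j \<noteq> 0" using AC[OF k(1)] Gnz by (metis fst_conv snd_conv)
  qed (use A0 in blast)
  have m4: "m \<ge> 4" using n2 m_def by simp
  have prvlt: "prv m p < m" if "p < m" for p using m4 that unfolding prv_def by auto
  have prvpar: "even (prv m p) \<longleftrightarrow> odd p" if "p < m" for p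
    using that m4 unfolding prv_def m_def by (auto simp: even_diff_nat)
  have Kset: "{k. k < 2*m \<and> inc u (C k)} = {p, prv m p, m+p', m+prv m p'}"
    if pp: "p < m" "p' < m" "vs!p = u" "ws!p' = u" for u p p'
  proof -
    have I1: "{k. k < m \<and> inc u (cellof vs k)} = {p, prv m p}"
      using hc.inc_set[OF hv, of p] lv pp by simp
    have I2: "{k. k < m \<and> inc u (cellof ws k)} = {p', prv m p'}"
      using hc.inc_set[OF hw, of p'] lw pp by simp
    show ?thesis
    proof (rule set_eqI)
      fix k
      show "k \<in> {k. k < 2*m \<and> inc u (C k)} \<longleftrightarrow> k \<in> {p, prv m p, m+p', m+prv m p'}"
      proof (cases "k < m")
        case True
        have c: "C k = cellof vs k" using True unfolding C_def by simp
        have "k \<in> {k. k < m \<and> inc u (cellof vs k)} \<longleftrightarrow> k \<in> {p, prv m p}" by (simp only: I1)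
        then have h: "inc u (C k) \<longleftrightarrow> k \<in> {p, prv m p}" using True c by simp
        have "k \<in> {p, prv m p, m+p', m+prv m p'} \<longleftrightarrow> k \<in> {p, prv m p}"
          unfolding insert_iff empty_iff using True by arith
        then show ?thesis using True h by simp
      next
        case False
        have c: "C k = cellof ws (k - m)" using False unfolding C_def by simp
        have "k - m \<in> {k. k < m \<and> inc u (cellof ws k)} \<longleftrightarrow> k - m \<in> {p', prv m p'}" by (simp only: I2)
        then have h: "k < 2*m \<and> inc u (C k) \<longleftrightarrow> k - m \<in> {p', prv m p'}" using False c by auto
        have "k \<in> {p, prv m p, m+p', m+prv m p'} \<longleftrightarrow> k - m \<in> {p', prv m p'}"
          unfolding insert_iff empty_iff using False pp(1) prvlt[OF pp(1)] by arith
        then show ?thesis using h by simp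
      qed
    qed
  qed
  have Gv1: "G k = s + int k + 1" if "k < m" "even k" for k using that unfolding G_def by simp
  have Gv2: "G k = - (s + int k + 1)" if "k < m" "odd k" for k using that unfolding G_def by simp
  have Gv3: "G (m + j) = - (t + int j + 1)" if "even j" for j using that unfolding G_def by simp
  have Gv4: "G (m + j) = t + int j + 1" if "odd j" for j using that unfolding G_def by simp
  have Gsum: "G p + G (prv m p) + G (m+p') + G (m + prv m p') = 0"
    if pp: "p < m" "p' < m" "even p \<longleftrightarrow> even p'" "p = 0 \<longleftrightarrow> p' = 0" for p p'
  proof (cases "p = 0")
    case True
    then have p0: "p' = 0" using pp by simp
    have o: "odd (m - 1)" "m - 1 < m" using m4 unfolding m_def by auto
    have pr: "prv m p = m - 1" "prv m p' = m - 1" using True p0 unfolding prv_def by auto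
    have i: "int (m - 1) = int m - 1" using m4 by simp
    have "G p = s + 1" using Gv1[of 0] True m4 by simp
    moreover have "G (prv m p) = - (s + int (m - 1) + 1)" using Gv2[OF o(2) o(1)] pr by simp
    moreover have "G (m + p') = - (t + 1)" using Gv3[of 0] p0 by simp
    moreover have "G (m + prv m p') = t + int (m - 1) + 1" using Gv4[OF o(1)] pr by simp
    ultimately show ?thesis using i by simp
  next
    case False
    then have p0: "p' \<noteq> 0" using pp by simp
    have pr: "prv m p = p - 1" "prv m p' = p' - 1" using False p0 unfolding prv_def by auto
    have i: "int (p - 1) = int p - 1" "int (p' - 1) = int p' - 1" using False p0 by auto
    have l: "p - 1 < m" using pp by simp
    show ?thesis
    proof (cases "even p")
      case True
      have o: "odd (p - 1)" "odd (p' - 1)" "even p'" using True False p0 pp(3) by auto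
      show ?thesis using Gv1[OF pp(1) True] Gv2[OF l o(1)] Gv3[OF o(3)] Gv4[OF o(2)] pr i by simp
    next
      case c: False
      have o: "even (p - 1)" "even (p' - 1)" "odd p'" using c False p0 pp(3) by auto
      show ?thesis using Gv2[OF pp(1) c] Gv1[OF l o(1)] Gv4[OF o(3)] Gv3[OF o(2)] pr i by simp
    qed
  qed
  have cnt4: "card {k \<in> {p, prv m p, m+p', m+prv m p'}. G k > 0} = 2 \<and>
              card {k \<in> {p, prv m p, m+p', m+prv m p'}. G k < 0} = 2"
    if pp: "p < m" "p' < m" "even p \<longleftrightarrow> even p'" for p p'
  proof -
    have l1: "prv m p < m" "prv m p' < m" using prvlt pp by auto
    have e1: "even (prv m p) \<longleftrightarrow> odd p" "even (prv m p') \<longleftrightarrow> odd p'" using prvpar pp by auto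
    have d1: "m + p' - m = p'" "m + prv m p' - m = prv m p'" by simp_all
    have g1: "G p > 0 \<longleftrightarrow> even p" using Gpos[of p] pp(1) by simp
    have g2: "G (prv m p) > 0 \<longleftrightarrow> odd p" using Gpos[of "prv m p"] l1 e1 by simp
    have g3: "G (m + p') > 0 \<longleftrightarrow> odd p" using Gpos[of "m + p'"] d1 pp(3) by simp
    have g4: "G (m + prv m p') > 0 \<longleftrightarrow> even p" using Gpos[of "m + prv m p'"] d1 e1 pp(3) by simp
    have n1: "G k < 0 \<longleftrightarrow> \<not> G k > 0" for k using Gnz[of k] by auto
    have ne: "p \<noteq> m + p'" "p \<noteq> m + prv m p'" "prv m p \<noteq> m + p'" "prv m p \<noteq> m + prv m p'"
      using pp l1 by auto
    show ?thesis
    proof (cases "even p")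
      case True
      have "{k \<in> {p, prv m p, m+p', m+prv m p'}. G k > 0} = {p, m + prv m p'}"
        using True g1 g2 g3 g4 by blast
      moreover have "{k \<in> {p, prv m p, m+p', m+prv m p'}. G k < 0} = {prv m p, m + p'}"
        using True g1 g2 g3 g4 n1 by blast
      ultimately show ?thesis using ne by simp
    next
      case False
      have "{k \<in> {p, prv m p, m+p', m+prv m p'}. G k > 0} = {prv m p, m + p'}"
        using False g1 g2 g3 g4 by blast
      moreover have "{k \<in> {p, prv m p, m+p', m+prv m p'}. G k < 0} = {p, m + prv m p'}"
        using False g1 g2 g3 g4 n1 by blast
      ultimately show ?thesis using ne by simp
    qed
  qed
  have posv: "\<exists>p<m. vs!p = u" "\<exists>p<m. ws!p = u" if "u \<in> Inl ` {..<n} \<union> Inr ` {..<n}" for u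
  proof -
    have "u \<in> set vs" "u \<in> set ws" using that hc.setv[OF hv] hc.setv[OF hw] by simp_all
    then show "\<exists>p<m. vs!p = u" "\<exists>p<m. ws!p = u" using lv lw by (simp_all add: in_set_conv_nth)
  qed
  have zero_iff: "p = 0 \<longleftrightarrow> u = Inl 0" if "vs!p = u" "p < m" for p u
  proof -
    have "vs ! p = vs ! 0 \<longleftrightarrow> p = 0"
      using nth_eq_iff_index_eq[OF hc.dist[OF hv], of p 0] that lv m4 by simp
    then show ?thesis using that hc.v0[OF hv] by auto
  qed
  have zero_iff2: "p = 0 \<longleftrightarrow> u = Inl 0" if "ws!p = u" "p < m" for p u
  proof -
    have "ws ! p = ws ! 0 \<longleftrightarrow> p = 0"
      using nth_eq_iff_index_eq[OF hc.dist[OF hw], of p 0] that lw m4 by simp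
    then show ?thesis using that hc.v0[OF hw] by auto
  qed
  have parv: "p < m \<Longrightarrow> isl (vs!p) \<longleftrightarrow> even p" "p < m \<Longrightarrow> isl (ws!p) \<longleftrightarrow> even p" for p
    using hc.parity[OF hv] hc.parity[OF hw] lv lw by auto
  have vert: "\<exists>p p'. p < m \<and> p' < m \<and> (even p \<longleftrightarrow> even p') \<and> (p = 0 \<longleftrightarrow> p' = 0) \<and>
      {k. k < 2*m \<and> inc u (C k)} = {p, prv m p, m+p', m+prv m p'}"
    if u: "u \<in> Inl ` {..<n} \<union> Inr ` {..<n}" for u
  proof -
    obtain p p' where p: "p < m" "vs!p = u" and p': "p' < m" "ws!p' = u" using posv[OF u] by blast
    have "even p \<longleftrightarrow> even p'" using parv[OF p(1)] parv[OF p'(1)] p p' by simp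
    moreover have "p = 0 \<longleftrightarrow> p' = 0" using zero_iff[OF p(2,1)] zero_iff2[OF p'(2,1)] by simp
    ultimately show ?thesis using Kset[OF p(1) p'(1) p(2) p'(2)] p p' by blast
  qed
  have incL: "inc (Inl i) c \<longleftrightarrow> fst c = i" for i c unfolding inc_def by auto
  have incR: "inc (Inr j) c \<longleftrightarrow> snd c = j" for j c unfolding inc_def by auto
  have sum4: "(\<Sum>k\<in>{p, prv m p, m+p', m+prv m p'}. G k) = G p + G (prv m p) + G (m+p') + G (m + prv m p')"
    if "p < m" "p' < m" for p p'
  proof -
    have l: "prv m p < m" "prv m p' < m" using that prvlt by auto
    have ne: "prv m p \<noteq> p" "prv m p' \<noteq> p'" using that m4 unfolding prv_def by auto
    have d: "p \<notin> {prv m p, m+p', m+prv m p'}" "prv m p \<notin> {m+p', m+prv m p'}" "m + p' \<notin> {m + prv m p'}"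
      using l ne that by auto
    show ?thesis using d by (simp add: add.assoc)
  qed
  have rowsum: "(\<Sum>j<n. A i j) = (\<Sum>k\<in>{k. k < 2*m \<and> fst (C k) = i}. G k)" for i
  proof -
    have "(\<Sum>j<n. A i j) = (\<Sum>k<2*m. \<Sum>j<n. if C k = (i, j) then G k else 0)"
      unfolding A_def by (rule sum.swap)
    also have "\<dots> = (\<Sum>k<2*m. if fst (C k) = i then G k else 0)"
    proof (rule sum.cong)
      fix k assume k: "k \<in> {..<2*m}"
      have "(\<Sum>j<n. if C k = (i, j) then G k else 0) = (\<Sum>j<n. if fst (C k) = i then (if snd (C k) = j then G k else 0) else 0)"
        by (rule sum.cong) (auto simp: prod_eq_iff)
      also have "\<dots> = (if fst (C k) = i then G k else 0)" using rng[of k] k by auto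
      finally show "(\<Sum>j<n. if C k = (i, j) then G k else 0) = (if fst (C k) = i then G k else 0)" .
    qed simp
    also have "\<dots> = (\<Sum>k\<in>{k \<in> {..<2*m}. fst (C k) = i}. G k)"
      by (rule sum.inter_filter[symmetric]) simp
    also have "{k \<in> {..<2*m}. fst (C k) = i} = {k. k < 2*m \<and> fst (C k) = i}" by blast
    finally show ?thesis .
  qed
  have colsum: "(\<Sum>i<n. A i j) = (\<Sum>k\<in>{k. k < 2*m \<and> snd (C k) = j}. G k)" for j
  proof -
    have "(\<Sum>i<n. A i j) = (\<Sum>k<2*m. \<Sum>i<n. if C k = (i, j) then G k else 0)"
      unfolding A_def by (rule sum.swap)
    also have "\<dots> = (\<Sum>k<2*m. if snd (C k) = j then G k else 0)"
    proof (rule sum.cong)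
      fix k assume k: "k \<in> {..<2*m}"
      have "(\<Sum>i<n. if C k = (i, j) then G k else 0) = (\<Sum>i<n. if snd (C k) = j then (if fst (C k) = i then G k else 0) else 0)"
        by (rule sum.cong) (auto simp: prod_eq_iff)
      also have "\<dots> = (if snd (C k) = j then G k else 0)" using rng[of k] k by auto
      finally show "(\<Sum>i<n. if C k = (i, j) then G k else 0) = (if snd (C k) = j then G k else 0)" .
    qed simp
    also have "\<dots> = (\<Sum>k\<in>{k \<in> {..<2*m}. snd (C k) = j}. G k)"
      by (rule sum.inter_filter[symmetric]) simp
    also have "{k \<in> {..<2*m}. snd (C k) = j} = {k. k < 2*m \<and> snd (C k) = j}" by blast
    finally show ?thesis .
  qed
  have rows0: "\<forall>i<n. (\<Sum>j<n. A i j) = 0"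
  proof (intro allI impI)
    fix i assume i: "i < n"
    obtain p p' where pp: "p < m" "p' < m" "even p \<longleftrightarrow> even p'" "p = 0 \<longleftrightarrow> p' = 0"
      "{k. k < 2*m \<and> inc (Inl i) (C k)} = {p, prv m p, m+p', m+prv m p'}"
      using vert[of "Inl i"] i by blast
    then have "{k. k < 2*m \<and> fst (C k) = i} = {p, prv m p, m+p', m+prv m p'}" using incL by simp
    then show "(\<Sum>j<n. A i j) = 0" using rowsum[of i] sum4[OF pp(1,2)] Gsum[OF pp(1-4)] by simp
  qed
  have cols0: "\<forall>j<n. (\<Sum>i<n. A i j) = 0"
  proof (intro allI impI)
    fix j assume j: "j < n"
    obtain p p' where pp: "p < m" "p' < m" "even p \<longleftrightarrow> even p'" "p = 0 \<longleftrightarrow> p' = 0"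
      "{k. k < 2*m \<and> inc (Inr j) (C k)} = {p, prv m p, m+p', m+prv m p'}"
      using vert[of "Inr j"] j by blast
    then have "{k. k < 2*m \<and> snd (C k) = j} = {p, prv m p, m+p', m+prv m p'}" using incR by simp
    then show "(\<Sum>i<n. A i j) = 0" using colsum[of j] sum4[OF pp(1,2)] Gsum[OF pp(1-4)] by simp
  qed
  have rowQ: "card {j. j < n \<and> Q (A i j)} = card {k. k < 2*m \<and> fst (C k) = i \<and> Q (G k)}"
    if Q0: "\<not> Q 0" for Q i
  proof -
    have "{j. j < n \<and> Q (A i j)} = (\<lambda>k. snd (C k)) ` {k. k < 2*m \<and> fst (C k) = i \<and> Q (G k)}"
    proof (rule set_eqI, rule iffI)
      fix j assume "j \<in> {j. j < n \<and> Q (A i j)}"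
      then have j: "j < n" "Q (A i j)" by auto
      then have "A i j \<noteq> 0" using Q0 by auto
      then have "(i, j) \<in> C ` {..<2*m}" using nz imC by blast
      then obtain k where k: "k < 2*m" "C k = (i, j)" by (metis imageE lessThan_iff)
      then have "A i j = G k" using AC[OF k(1)] by simp
      then show "j \<in> (\<lambda>k. snd (C k)) ` {k. k < 2*m \<and> fst (C k) = i \<and> Q (G k)}"
        using k j by (auto intro!: image_eqI[of _ _ k])
    next
      fix j assume "j \<in> (\<lambda>k. snd (C k)) ` {k. k < 2*m \<and> fst (C k) = i \<and> Q (G k)}"
      then obtain k where k: "k < 2*m" "fst (C k) = i" "Q (G k)" "j = snd (C k)" by auto
      have "C k = (i, j)" using k(2,4) by (simp add: prod_eq_iff)
      then have "A i j = G k" using AC[OF k(1)] by simp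
      moreover have "j < n" using rng[OF k(1)] k(4) by simp
      ultimately show "j \<in> {j. j < n \<and> Q (A i j)}" using k(3) by simp
    qed
    moreover have "inj_on (\<lambda>k. snd (C k)) {k. k < 2*m \<and> fst (C k) = i \<and> Q (G k)}"
    proof (rule inj_onI)
      fix k k' assume h: "k \<in> {k. k < 2*m \<and> fst (C k) = i \<and> Q (G k)}" "k' \<in> {k. k < 2*m \<and> fst (C k) = i \<and> Q (G k)}"
        "snd (C k) = snd (C k')"
      then have "C k = C k'" by (simp add: prod_eq_iff)
      moreover have "k \<in> {..<2*m}" "k' \<in> {..<2*m}" using h by auto
      ultimately show "k = k'" using inj_onD[OF injC] by blast
    qed
    ultimately show ?thesis by (simp add: card_image)
  qed
  have colQ: "card {i. i < n \<and> Q (A i j)} = card {k. k < 2*m \<and> snd (C k) = j \<and> Q (G k)}"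
    if Q0: "\<not> Q 0" for Q j
  proof -
    have "{i. i < n \<and> Q (A i j)} = (\<lambda>k. fst (C k)) ` {k. k < 2*m \<and> snd (C k) = j \<and> Q (G k)}"
    proof (rule set_eqI, rule iffI)
      fix i assume "i \<in> {i. i < n \<and> Q (A i j)}"
      then have i: "i < n" "Q (A i j)" by auto
      then have "A i j \<noteq> 0" using Q0 by auto
      then have "(i, j) \<in> C ` {..<2*m}" using nz imC by blast
      then obtain k where k: "k < 2*m" "C k = (i, j)" by (metis imageE lessThan_iff)
      then have "A i j = G k" using AC[OF k(1)] by simp
      then show "i \<in> (\<lambda>k. fst (C k)) ` {k. k < 2*m \<and> snd (C k) = j \<and> Q (G k)}"
        using k i by (auto intro!: image_eqI[of _ _ k])
    next
      fix i assume "i \<in> (\<lambda>k. fst (C k)) ` {k. k < 2*m \<and> snd (C k) = j \<and> Q (G k)}"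
      then obtain k where k: "k < 2*m" "snd (C k) = j" "Q (G k)" "i = fst (C k)" by auto
      have "C k = (i, j)" using k(2,4) by (simp add: prod_eq_iff)
      then have "A i j = G k" using AC[OF k(1)] by simp
      moreover have "i < n" using rng[OF k(1)] k(4) by simp
      ultimately show "i \<in> {i. i < n \<and> Q (A i j)}" using k(3) by simp
    qed
    moreover have "inj_on (\<lambda>k. fst (C k)) {k. k < 2*m \<and> snd (C k) = j \<and> Q (G k)}"
    proof (rule inj_onI)
      fix k k' assume h: "k \<in> {k. k < 2*m \<and> snd (C k) = j \<and> Q (G k)}" "k' \<in> {k. k < 2*m \<and> snd (C k) = j \<and> Q (G k)}"
        "fst (C k) = fst (C k')"
      then have "C k = C k'" by (simp add: prod_eq_iff)
      moreover have "k \<in> {..<2*m}" "k' \<in> {..<2*m}" using h by auto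
      ultimately show "k = k'" using inj_onD[OF injC] by blast
    qed
    ultimately show ?thesis by (simp add: card_image)
  qed
  have shift: "shiftable n A"
    unfolding shiftable_def
  proof (intro conjI allI impI)
    fix i assume i: "i < n"
    obtain p p' where pp: "p < m" "p' < m" "even p \<longleftrightarrow> even p'" "p = 0 \<longleftrightarrow> p' = 0"
      "{k. k < 2*m \<and> inc (Inl i) (C k)} = {p, prv m p, m+p', m+prv m p'}"
      using vert[of "Inl i"] i by blast
    then have K: "{k. k < 2*m \<and> fst (C k) = i} = {p, prv m p, m+p', m+prv m p'}" using incL by simp
    have eP: "{k. k < 2*m \<and> fst (C k) = i \<and> G k > 0} = {k \<in> {p, prv m p, m+p', m+prv m p'}. G k > 0}"
      using K by blast
    have eN: "{k. k < 2*m \<and> fst (C k) = i \<and> G k < 0} = {k \<in> {p, prv m p, m+p', m+prv m p'}. G k < 0}"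
      using K by blast
    have cP: "card {j. j < n \<and> A i j > 0} = card {k. k < 2*m \<and> fst (C k) = i \<and> G k > 0}"
      using rowQ[of "\<lambda>x. x > 0" i] by simp
    have cN: "card {j. j < n \<and> A i j < 0} = card {k. k < 2*m \<and> fst (C k) = i \<and> G k < 0}"
      using rowQ[of "\<lambda>x. x < 0" i] by simp
    show "card {j. j < n \<and> A i j > 0} = card {j. j < n \<and> A i j < 0}"
      unfolding cP cN eP eN using cnt4[OF pp(1-3)] by (elim conjE) simp
  next
    fix j assume j: "j < n"
    obtain p p' where pp: "p < m" "p' < m" "even p \<longleftrightarrow> even p'" "p = 0 \<longleftrightarrow> p' = 0"
      "{k. k < 2*m \<and> inc (Inr j) (C k)} = {p, prv m p, m+p', m+prv m p'}"
      using vert[of "Inr j"] j by blast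
    then have K: "{k. k < 2*m \<and> snd (C k) = j} = {p, prv m p, m+p', m+prv m p'}" using incR by simp
    have eP: "{k. k < 2*m \<and> snd (C k) = j \<and> G k > 0} = {k \<in> {p, prv m p, m+p', m+prv m p'}. G k > 0}"
      using K by blast
    have eN: "{k. k < 2*m \<and> snd (C k) = j \<and> G k < 0} = {k \<in> {p, prv m p, m+p', m+prv m p'}. G k < 0}"
      using K by blast
    have cP: "card {i. i < n \<and> A i j > 0} = card {k. k < 2*m \<and> snd (C k) = j \<and> G k > 0}"
      using colQ[of "\<lambda>x. x > 0" j] by simp
    have cN: "card {i. i < n \<and> A i j < 0} = card {k. k < 2*m \<and> snd (C k) = j \<and> G k < 0}"
      using colQ[of "\<lambda>x. x < 0" j] by simp
    show "card {i. i < n \<and> A i j > 0} = card {i. i < n \<and> A i j < 0}"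
      unfolding cP cN eP eN using cnt4[OF pp(1-3)] by (elim conjE) simp
  qed
  define T where "T = {s + k | k. 1 \<le> k \<and> k \<le> 2 * int n} \<union> {t + k | k. 1 \<le> k \<and> k \<le> 2 * int n}"
  have absG: "\<bar>G k\<bar> = (if k < m then s + int k + 1 else t + int (k - m) + 1)" for k
    using assms(4,5) unfolding G_def by auto
  have bijG: "bij_betw (\<lambda>k. \<bar>G k\<bar>) {..<2*m} T"
  proof (rule bij_betw_imageI)
    show "inj_on (\<lambda>k. \<bar>G k\<bar>) {..<2*m}"
    proof (rule inj_onI)
      fix k k' assume k: "k \<in> {..<2*m}" "k' \<in> {..<2*m}" "\<bar>G k\<bar> = \<bar>G k'\<bar>"
      then have e: "(if k < m then s + int k + 1 else t + int (k - m) + 1) =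
                    (if k' < m then s + int k' + 1 else t + int (k' - m) + 1)" using absG by simp
      have b1: "int (k - m) < int m" "int (k' - m) < int m" using k by auto
      have mm: "int m = 2 * int n" using m_def by simp
      show "k = k'"
      proof (cases "k < m"; cases "k' < m")
        assume "k < m" "k' < m" then show ?thesis using e by simp
      next
        assume "k < m" "\<not> k' < m"
        then have "s + int k + 1 = t + int (k' - m) + 1" using e by simp
        then show ?thesis using b1 mm assms(4,5) by linarith
      next
        assume "\<not> k < m" "k' < m"
        then have "t + int (k - m) + 1 = s + int k' + 1" using e by simp
        then show ?thesis using b1 mm assms(4,5) by linarith
      next
        assume a: "\<not> k < m" "\<not> k' < m"
        then have "int (k - m) = int (k' - m)" using e by simp
        then show ?thesis using a by simp
      qed
    qed
    show "(\<lambda>k. \<bar>G k\<bar>) ` {..<2*m} = T"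
    proof (rule set_eqI, rule iffI)
      fix x assume "x \<in> (\<lambda>k. \<bar>G k\<bar>) ` {..<2*m}"
      then obtain k where k: "k < 2*m" "x = \<bar>G k\<bar>" by auto
      show "x \<in> T"
      proof (cases "k < m")
        case True
        then have "x = s + (int k + 1)" "1 \<le> int k + 1" "int k + 1 \<le> 2 * int n" using k absG m_def by auto
        then show ?thesis unfolding T_def by blast
      next
        case False
        then have "x = t + (int (k - m) + 1)" "1 \<le> int (k - m) + 1" "int (k - m) + 1 \<le> 2 * int n"
          using k absG m_def by auto
        then show ?thesis unfolding T_def by blast
      qed
    next
      fix x assume "x \<in> T"
      then show "x \<in> (\<lambda>k. \<bar>G k\<bar>) ` {..<2*m}" unfolding T_def
      proof (elim UnE CollectE exE conjE)
        fix k assume k: "x = s + k" "1 \<le> k" "k \<le> 2 * int n"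
        define kk where "kk = nat (k - 1)"
        have "kk < m" "int kk = k - 1" using k m_def kk_def by auto
        then have "x = \<bar>G kk\<bar>" "kk < 2*m" using absG[of kk] k by auto
        then show ?thesis by blast
      next
        fix k assume k: "x = t + k" "1 \<le> k" "k \<le> 2 * int n"
        define kk where "kk = nat (k - 1)"
        have "kk < m" "int kk = k - 1" using k m_def kk_def by auto
        then have "x = \<bar>G (kk + m)\<bar>" "kk + m < 2*m" using absG[of "kk + m"] k by auto
        then show ?thesis by blast
      qed
    qed
  qed
  have bijC: "bij_betw C {..<2*m} (S1 \<union> S2)" using injC imC by (rule bij_betw_imageI)
  have "bij_betw ((\<lambda>(i, j). \<bar>A i j\<bar>) \<circ> C) {..<2*m} T"
  proof -
    have "bij_betw ((\<lambda>(i, j). \<bar>A i j\<bar>) \<circ> C) {..<2*m} T = bij_betw (\<lambda>k. \<bar>G k\<bar>) {..<2*m} T"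
    proof (rule bij_betw_cong)
      fix k assume "k \<in> {..<2*m}"
      then have "A (fst (C k)) (snd (C k)) = G k" using AC by simp
      then show "((\<lambda>(i, j). \<bar>A i j\<bar>) \<circ> C) k = \<bar>G k\<bar>" by (simp add: case_prod_beta)
    qed
    then show ?thesis using bijG by simp
  qed
  then have bijA: "bij_betw (\<lambda>(i, j). \<bar>A i j\<bar>) (S1 \<union> S2) T"
    using bij_betw_comp_iff[OF bijC] by blast
  have nz': "\<forall>i j. (i, j) \<in> S1 \<union> S2 \<longleftrightarrow> A i j \<noteq> 0" using nz by blast
  show ?thesis
    apply (rule exI[of _ A])
    using nz' shift bijA[unfolded T_def] rows0 cols0 by (intro conjI)
qed

end
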